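(* Let $X$ be a complete CAT(0) space, $T_n:X\to X$ for every $n\in\mathbb{N}$, and $(\gamma_n)$ a sequence of positive reals with $\sum_{n=0}^\infty\gamma_n^2=\infty$. Assume that $(T_n)$ is jointly $(P_2)$ with respect to $(\gamma_n)$ (in particular, this holds if $(T_n)$ is jointly firmly nonexpansive with respect to $(\gamma_n)$) and that $F:=\bigcap_{n\in\mathbb{N}}Fix(T_n)\neq\emptyset$. Let $x\in X$, $x_0:=x$, $x_{n+1}:=T_nx_n$ for all $n$. Then $(x_n)$ $\Delta$-converges to a point of $F$.
   Context: A geodesic space $(X,d)$ is CAT(0) if for all $z\in X$, all geodesics $\gamma:[a,b]\to X$ and all $t\in[0,1]$, $d^2(z,\gamma((1-t)a+tb))\le(1-t)d^2(z,\gamma(a))+td^2(z,\gamma(b))-t(1-t)d^2(\gamma(a),\gamma(b))$. CAT(0) spaces are uniquely geodesic; $(1-t)x+ty$ denotes the point at distance $t\,d(x,y)$ from $x$ on the geodesic from $x$ to $y$. $(T_n)$ is jointly firmly nonexpansive w.r.t. $(\gamma_n)$ if for all $n,m$, $x,y\in X$, $\alpha,\beta\in[0,1]$ with $(1-\alpha)\gamma_n=(1-\beta)\gamma_m$: $d(T_nx,T_my)\le d((1-\alpha)x+\alpha T_nx,(1-\beta)y+\beta T_my)$. $(T_n)$ is jointly $(P_2)$ w.r.t. $(\gamma_n)$ if for all $n,m$ and $x,y\in X$: $\frac1{\gamma_m}\big(d^2(T_nx,T_my)+d^2(y,T_my)-d^2(y,T_nx)\big)\le\frac1{\gamma_n}\big(d^2(x,T_my)-d^2(x,T_nx)-d^2(T_nx,T_my)\big)$.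 $Fix(T)$ is the fixed point set. For a bounded sequence $(u_n)$, an asymptotic center is a minimizer over $X$ of $y\mapsto\limsup_n d(y,u_n)$; a bounded sequence $\Delta$-converges to $x$ if every subsequence has $x$ as its unique asymptotic center. *)

theory Defs
  imports "HOL-Analysis.Analysis"
begin

text \<open>The space X is the whole (nonempty) type 'a of class metric_space;
  completeness is the class complete_space.\<close>

definition geodesic_on :: "real \<Rightarrow> real \<Rightarrow> (real \<Rightarrow> 'a::metric_space) \<Rightarrow> bool" where
  "geodesic_on a b g \<longleftrightarrow> a \<le> b \<and>
     (\<forall>s\<in>{a..b}. \<forall>t\<in>{a..b}. dist (g s) (g t) = \<bar>s - t\<bar>)"

definition geodesic_space :: "'a::metric_space itself \<Rightarrow> bool" where
  "geodesic_space _ \<longleftrightarrow> (\<forall>x y::'a. \<exists>g. geodesic_on 0 (dist x y) g \<and> g 0 = x \<and> g (dist x y) = y)"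

definition CAT0 :: "'a::metric_space itself \<Rightarrow> bool" where
  "CAT0 X \<longleftrightarrow> geodesic_space X \<and>
     (\<forall>(z::'a) g a b t. geodesic_on a b g \<and> 0 \<le> t \<and> t \<le> 1 \<longrightarrow>
        (dist z (g ((1 - t) * a + t * b)))\<^sup>2 \<le>
          (1 - t) * (dist z (g a))\<^sup>2 + t * (dist z (g b))\<^sup>2 - t * (1 - t) * (dist (g a) (g b))\<^sup>2)"

text \<open>(1-t)x + ty: the point at distance t d(x,y) from x on the geodesic from x to y.\<close>
definition cmb :: "real \<Rightarrow> 'a::metric_space \<Rightarrow> 'a \<Rightarrow> 'a" where
  "cmb t x y = (THE z. \<exists>g. geodesic_on 0 (dist x y) g \<and> g 0 = x \<and> g (dist x y) = y \<and>
                          z = g (t * dist x y))"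

definition jointly_FNE :: "(nat \<Rightarrow> 'a::metric_space \<Rightarrow> 'a) \<Rightarrow> (nat \<Rightarrow> real) \<Rightarrow> bool" where
  "jointly_FNE T \<gamma> \<longleftrightarrow> (\<forall>n m x y \<alpha> \<beta>. \<alpha> \<in> {0..1} \<and> \<beta> \<in> {0..1} \<and> (1 - \<alpha>) * \<gamma> n = (1 - \<beta>) * \<gamma> m \<longrightarrow>
      dist (T n x) (T m y) \<le> dist (cmb \<alpha> x (T n x)) (cmb \<beta> y (T m y)))"

definition jointly_P2 :: "(nat \<Rightarrow> 'a::metric_space \<Rightarrow> 'a) \<Rightarrow> (nat \<Rightarrow> real) \<Rightarrow> bool" where
  "jointly_P2 T \<gamma> \<longleftrightarrow> (\<forall>n m x y.
      (1 / \<gamma> m) * ((dist (T n x) (T m y))\<^sup>2 + (dist y (T m y))\<^sup>2 - (dist y (T n x))\<^sup>2)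
      \<le> (1 / \<gamma> n) * ((dist x (T m y))\<^sup>2 - (dist x (T n x))\<^sup>2 - (dist (T n x) (T m y))\<^sup>2))"

definition Fix :: "('a \<Rightarrow> 'a) \<Rightarrow> 'a set" where
  "Fix T = {x. T x = x}"

definition asymptotic_center :: "(nat \<Rightarrow> 'a::metric_space) \<Rightarrow> 'a \<Rightarrow> bool" where
  "asymptotic_center u c \<longleftrightarrow>
     (\<forall>y. limsup (\<lambda>n. ereal (dist c (u n))) \<le> limsup (\<lambda>n. ereal (dist y (u n))))"

definition Delta_converges :: "(nat \<Rightarrow> 'a::metric_space) \<Rightarrow> 'a \<Rightarrow> bool" where
  "Delta_converges u x \<longleftrightarrow> bounded (range u) \<and>
     (\<forall>\<sigma>. strict_mono \<sigma> \<longrightarrow> (\<forall>c. asymptotic_center (u \<circ> \<sigma>) c \<longleftrightarrow> c = x))"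

end

theory Submission
  imports Defs
begin

lemma L_fin:
  fixes v :: "nat \<Rightarrow> 'a::metric_space"
  assumes "bounded (range v)"
  shows "\<exists>R\<ge>0. limsup (\<lambda>n. ereal (dist y (v n))) = ereal R"
proof -
  obtain e where e: "\<And>n. dist y (v n) \<le> e"
    using assms unfolding bounded_any_center[of _ y] by blast
  have up: "limsup (\<lambda>n. ereal (dist y (v n))) \<le> ereal e"
    by (rule Limsup_bounded) (simp add: e)
  have "ereal 0 \<le> liminf (\<lambda>n. ereal (dist y (v n)))"
    by (rule Liminf_bounded) simp
  also have "\<dots> \<le> limsup (\<lambda>n. ereal (dist y (v n)))"
    by (rule Liminf_le_Limsup) simp
  finally have lo: "0 \<le> limsup (\<lambda>n. ereal (dist y (v n)))" by (simp add: zero_ereal_def)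
  show ?thesis
    using up lo by (cases "limsup (\<lambda>n. ereal (dist y (v n)))") auto
qed

lemma L_G:
  fixes v :: "nat \<Rightarrow> 'a::metric_space"
  assumes c: "asymptotic_center v c"
    and R: "limsup (\<lambda>k. ereal (dist c (v k))) = ereal R" "R \<ge> 0"
    and D: "D > 0"
    and ev: "\<And>\<epsilon>. \<epsilon> > 0 \<Longrightarrow> eventually (\<lambda>k. (dist w (v k))\<^sup>2 \<le> (R+\<epsilon>)\<^sup>2 - D) sequentially"
  shows False
proof -
  define \<epsilon> where "\<epsilon> = min 1 (D / (2*(2*R+1)))"
  have e0: "\<epsilon> > 0" using D R by (simp add: \<epsilon>_def)
  have e1: "\<epsilon> \<le> 1" "\<epsilon> \<le> D / (2*(2*R+1))" by (auto simp: \<epsilon>_def)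
  have "\<epsilon> * (2*R+1) \<le> D/2" using e1(2) R(2) by (simp add: field_simps)
  moreover have "\<epsilon>^2 \<le> \<epsilon>" using e0 e1 by (simp add: power2_eq_square mult_le_cancel_left1)
  ultimately have sq: "(R+\<epsilon>)\<^sup>2 \<le> R\<^sup>2 + D/2"
    by (simp add: power2_eq_square algebra_simps)
  define C where "C = R\<^sup>2 - D/2"
  have ev2: "eventually (\<lambda>k. (dist w (v k))\<^sup>2 \<le> C) sequentially"
    using ev[OF e0] by eventually_elim (use sq in \<open>simp add: C_def\<close>)
  then obtain k where "(dist w (v k))\<^sup>2 \<le> C" using eventually_happens' by (metis eventually_sequentially order_refl)
  hence C0: "C \<ge> 0" by (meson order_trans zero_le_power2)
  have "eventually (\<lambda>k. ereal (dist w (v k)) \<le> ereal (sqrt C)) sequentially"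
    using ev2 by eventually_elim (simp add: real_le_rsqrt)
  hence "limsup (\<lambda>k. ereal (dist w (v k))) \<le> ereal (sqrt C)" by (rule Limsup_bounded)
  moreover have "limsup (\<lambda>k. ereal (dist c (v k))) \<le> limsup (\<lambda>k. ereal (dist w (v k)))"
    using c unfolding asymptotic_center_def by blast
  ultimately have "ereal R \<le> ereal (sqrt C)" using R by (metis order_trans)
  hence "R \<le> sqrt C" by simp
  hence "R\<^sup>2 \<le> (sqrt C)\<^sup>2" using R(2) by (simp add: power_mono)
  thus False using C0 D by (simp add: C_def)
qed

lemma L_mid:
  assumes "CAT0 TYPE('a::metric_space)"
  shows "\<exists>m::'a. \<forall>q. (dist q m)\<^sup>2 \<le> (dist q y)\<^sup>2/2 + (dist q z)\<^sup>2/2 - (dist y z)\<^sup>2/4"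
proof -
  from assms have gs: "geodesic_space TYPE('a)" and cat: "\<And>(q::'a) g a b t. geodesic_on a b g \<Longrightarrow> 0 \<le> t \<Longrightarrow> t \<le> 1 \<Longrightarrow>
        (dist q (g ((1 - t) * a + t * b)))\<^sup>2 \<le>
          (1 - t) * (dist q (g a))\<^sup>2 + t * (dist q (g b))\<^sup>2 - t * (1 - t) * (dist (g a) (g b))\<^sup>2"
    unfolding CAT0_def by blast+
  obtain g where g: "geodesic_on 0 (dist y z) g" "g 0 = y" "g (dist y z) = z"
    using gs unfolding geodesic_space_def by blast
  show ?thesis
  proof (intro exI allI)
    fix q
    have "(dist q (g ((1 - 1/2) * 0 + 1/2 * dist y z)))\<^sup>2 \<le>
          (1 - 1/2) * (dist q (g 0))\<^sup>2 + 1/2 * (dist q (g (dist y z)))\<^sup>2 - 1/2 * (1 - 1/2) * (dist (g 0) (g (dist y z)))\<^sup>2"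
      by (rule cat[OF g(1)]) auto
    thus "(dist q (g (dist y z / 2)))\<^sup>2 \<le> (dist q y)\<^sup>2/2 + (dist q z)\<^sup>2/2 - (dist y z)\<^sup>2/4"
      using g by simp
  qed
qed


lemma L_unique:
  fixes v :: "nat \<Rightarrow> 'a::metric_space"
  assumes cat: "CAT0 TYPE('a)" and bd: "bounded (range v)"
    and c: "asymptotic_center v c" and p: "asymptotic_center v p"
  shows "c = p"
proof (rule ccontr)
  assume ne: "c \<noteq> p"
  obtain R where R: "R \<ge> 0" "limsup (\<lambda>n. ereal (dist c (v n))) = ereal R"
    using L_fin[OF bd] by blast
  have "limsup (\<lambda>n. ereal (dist p (v n))) = limsup (\<lambda>n. ereal (dist c (v n)))"
    using c p unfolding asymptotic_center_def by (meson order.antisym)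
  hence Rp: "limsup (\<lambda>n. ereal (dist p (v n))) = ereal R" using R by simp
  obtain m where m: "\<And>q. (dist q m)\<^sup>2 \<le> (dist q c)\<^sup>2/2 + (dist q p)\<^sup>2/2 - (dist c p)\<^sup>2/4"
    using L_mid[OF cat] by blast
  show False
  proof (rule L_G[OF c R(2) R(1), of "(dist c p)\<^sup>2/4" m])
    show "0 < (dist c p)\<^sup>2 / 4" using ne by simp
    fix \<epsilon> :: real assume e: "\<epsilon> > 0"
    have "ereal R < ereal (R+\<epsilon>)" using e by simp
    hence e1: "eventually (\<lambda>k. ereal (dist c (v k)) < ereal (R+\<epsilon>)) sequentially"
      "eventually (\<lambda>k. ereal (dist p (v k)) < ereal (R+\<epsilon>)) sequentially"
      using R(2) Rp by (metis Limsup_lessD)+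
    show "eventually (\<lambda>k. (dist m (v k))\<^sup>2 \<le> (R+\<epsilon>)\<^sup>2 - (dist c p)\<^sup>2/4) sequentially"
      using e1
    proof eventually_elim
      case (elim k)
      have a: "(dist c (v k))\<^sup>2 \<le> (R+\<epsilon>)\<^sup>2" using elim by (simp add: power_mono)
      have b: "(dist p (v k))\<^sup>2 \<le> (R+\<epsilon>)\<^sup>2" using elim by (simp add: power_mono)
      have "(dist (v k) m)\<^sup>2 \<le> (dist (v k) c)\<^sup>2/2 + (dist (v k) p)\<^sup>2/2 - (dist c p)\<^sup>2/4" by (rule m)
      thus ?case using a b by (simp add: dist_commute)
    qed
  qed
qed

lemma L_exist:
  fixes v :: "nat \<Rightarrow> 'a::complete_space"
  assumes cat: "CAT0 TYPE('a)" and bd: "bounded (range v)"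
  shows "\<exists>c. asymptotic_center v c"
proof -
  define L where "L y = limsup (\<lambda>n. ereal (dist y (v n)))" for y
  define r where "r = Inf (range L)"
  obtain R0 where R0: "L undefined = ereal R0" using L_fin[OF bd] unfolding L_def by blast
  have Lnn: "0 \<le> L y" for y using L_fin[OF bd, of y] unfolding L_def by auto
  have "0 \<le> r" unfolding r_def using Lnn by (auto intro: Inf_greatest)
  moreover have "r \<le> ereal R0" unfolding r_def using R0 by (metis INF_lower UNIV_I)
  ultimately obtain rr where rr: "r = ereal rr" "rr \<ge> 0" by (cases r) auto
  define \<delta> where "\<delta> k = inverse (real (Suc k))" for k
  have d0: "0 < \<delta> k" "\<delta> k \<le> 1" for k by (auto simp: \<delta>_def field_simps)
  have "\<exists>y. L y < ereal (rr + \<delta> k)" for k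
  proof -
    have "Inf (range L) < ereal (rr + \<delta> k)" using rr d0 r_def by simp
    thus ?thesis by (auto simp: Inf_less_iff)
  qed
  then obtain Y where Y: "\<And>k. L (Y k) < ereal (rr + \<delta> k)" by metis
  have evY: "eventually (\<lambda>n. dist (Y k) (v n) < rr + \<delta> k) sequentially" for k
    using Limsup_lessD[OF Y[of k, unfolded L_def]] by simp
  have lowr: "ereal rr \<le> L y" for y using rr r_def by (metis INF_lower UNIV_I)
  have key: "(dist (Y j) (Y k))\<^sup>2 \<le> 4*(rr+1)*(\<delta> j + \<delta> k)" for j k
  proof -
    obtain m where m: "\<And>q. (dist q m)\<^sup>2 \<le> (dist q (Y j))\<^sup>2/2 + (dist q (Y k))\<^sup>2/2 - (dist (Y j) (Y k))\<^sup>2/4"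
      using L_mid[OF cat] by blast
    define K where "K = (rr + \<delta> j)\<^sup>2/2 + (rr + \<delta> k)\<^sup>2/2 - (dist (Y j) (Y k))\<^sup>2/4"
    have evK: "eventually (\<lambda>n. (dist m (v n))\<^sup>2 \<le> K) sequentially"
      using evY[of j] evY[of k]
    proof eventually_elim
      case (elim n)
      have a: "(dist (Y j) (v n))\<^sup>2 \<le> (rr+\<delta> j)\<^sup>2" using elim by (simp add: power_mono)
      have b: "(dist (Y k) (v n))\<^sup>2 \<le> (rr+\<delta> k)\<^sup>2" using elim by (simp add: power_mono)
      have "(dist (v n) m)\<^sup>2 \<le> (dist (v n) (Y j))\<^sup>2/2 + (dist (v n) (Y k))\<^sup>2/2 - (dist (Y j) (Y k))\<^sup>2/4" by (rule m)
      thus ?case using a b by (simp add: dist_commute K_def)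
    qed
    then obtain n where "(dist m (v n))\<^sup>2 \<le> K" unfolding eventually_sequentially by blast
    hence K0: "K \<ge> 0" by (meson order_trans zero_le_power2)
    have "eventually (\<lambda>n. ereal (dist m (v n)) \<le> ereal (sqrt K)) sequentially"
      using evK by eventually_elim (simp add: real_le_rsqrt)
    hence "L m \<le> ereal (sqrt K)" unfolding L_def by (rule Limsup_bounded)
    hence "rr \<le> sqrt K" using lowr[of m] by (metis ereal_less_eq(3) order_trans)
    hence "rr\<^sup>2 \<le> K" using rr(2) K0 by (metis power_mono real_sqrt_pow2)
    hence "(dist (Y j) (Y k))\<^sup>2 \<le> 4*rr*\<delta> j + 2*(\<delta> j)\<^sup>2 + 4*rr*\<delta> k + 2*(\<delta> k)\<^sup>2"
      unfolding K_def power2_sum mult.assoc by (simp add: field_simps)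
    moreover have "(\<delta> j)\<^sup>2 \<le> \<delta> j" "(\<delta> k)\<^sup>2 \<le> \<delta> k" using d0[of j] d0[of k]
      by (simp_all add: power2_eq_square mult_le_cancel_left1)
    ultimately show ?thesis using rr(2) d0[of j] d0[of k] by (simp add: algebra_simps)
  qed
  have "Cauchy Y"
  proof (rule metric_CauchyI)
    fix e :: real assume e: "e > 0"
    obtain M :: nat where M: "8*(rr+1)/e\<^sup>2 < real M" using reals_Archimedean2 by blast
    have "\<forall>j\<ge>M. \<forall>k\<ge>M. dist (Y j) (Y k) < e"
    proof (intro allI impI)
      fix j k assume jk: "j \<ge> M" "k \<ge> M"
      have dj: "\<delta> j \<le> inverse (real (Suc M))" "\<delta> k \<le> inverse (real (Suc M))"
        using jk by (auto simp: \<delta>_def intro!: le_imp_inverse_le)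
      have "(dist (Y j) (Y k))\<^sup>2 \<le> 4*(rr+1)*(2*inverse (real (Suc M)))"
        using key[of j k] dj rr(2) by (smt (verit) mult_left_mono)
      also have "\<dots> < e\<^sup>2"
      proof -
        have "8*(rr+1) < e\<^sup>2 * real (Suc M)" using M e
          by (simp add: field_simps) (smt (verit) mult_left_mono zero_less_power)
        thus ?thesis by (simp add: field_simps)
      qed
      finally show "dist (Y j) (Y k) < e" using e by (meson abs_le_square_iff linorder_not_le order.strict_trans2 zero_le_dist abs_of_nonneg less_imp_le power2_less_imp_less)
    qed
    thus "\<exists>M. \<forall>m\<ge>M. \<forall>n\<ge>M. dist (Y m) (Y n) < e" by blast
  qed
  then obtain c where c: "Y \<longlonglongrightarrow> c" using Cauchy_convergent convergent_def by blast
  obtain Rc where Rc: "L c = ereal Rc" using L_fin[OF bd, of c] unfolding L_def by blast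
  have "Rc \<le> rr + \<delta> k + dist c (Y k)" for k
  proof -
    have "eventually (\<lambda>n. ereal (dist c (v n)) \<le> ereal (rr + \<delta> k + dist c (Y k))) sequentially"
      using evY[of k] by eventually_elim (smt (verit) dist_triangle ereal_less_eq(3))
    hence "L c \<le> ereal (rr + \<delta> k + dist c (Y k))" unfolding L_def by (rule Limsup_bounded)
    thus ?thesis using Rc by simp
  qed
  moreover have "(\<lambda>k. rr + \<delta> k + dist c (Y k)) \<longlonglongrightarrow> rr + 0 + dist c c"
    by (intro tendsto_intros c) (unfold \<delta>_def, rule LIMSEQ_inverse_real_of_nat)
  ultimately have "Rc \<le> rr" using LIMSEQ_le_const by fastforce
  hence "L c \<le> L y" for y using Rc lowr[of y] by (metis ereal_less_eq(3) order_trans)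
  thus ?thesis unfolding asymptotic_center_def L_def by blast
qed


lemma sqdiff:
  fixes y u u' :: "'a::metric_space"
  assumes "dist y u \<le> B" "dist y u' \<le> B"
  shows "(dist y u)\<^sup>2 \<le> (dist y u')\<^sup>2 + 2*B*dist u u'"
proof -
  define s where "s = dist y u"
  define t where "t = dist y u'"
  define e where "e = dist u u'"
  have st: "s \<le> t + e" unfolding s_def t_def e_def by (metis dist_commute dist_triangle add.commute)
  have "s\<^sup>2 - t\<^sup>2 \<le> 2*B*e"
  proof (cases "s \<le> t")
    case True
    hence "s\<^sup>2 \<le> t\<^sup>2" by (simp add: power_mono s_def)
    moreover have "0 \<le> 2*B*e" using assms unfolding e_def by (simp add: order_trans[OF zero_le_dist])
    ultimately show ?thesis by simp
  next
    case False
    have "s\<^sup>2 - t\<^sup>2 = (s - t) * (s + t)" by (simp add: power2_eq_square algebra_simps)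
    also have "\<dots> \<le> e * (2*B)"
      by (rule mult_mono) (use st False assms in \<open>auto simp: s_def t_def e_def\<close>)
    also have "\<dots> = 2*B*e" by (rule mult.commute)
    finally show ?thesis .
  qed
  thus ?thesis unfolding s_def t_def e_def by simp
qed

theorem theorem3p13:
  fixes T :: "nat \<Rightarrow> 'a::complete_space \<Rightarrow> 'a"
    and \<gamma> :: "nat \<Rightarrow> real" and x :: 'a and xs :: "nat \<Rightarrow> 'a"
  assumes "CAT0 TYPE('a)"
    and "\<And>n. \<gamma> n > 0"
    and "\<not> summable (\<lambda>n. (\<gamma> n)\<^sup>2)"
    and "jointly_P2 T \<gamma>"
    and "(\<Inter>n. Fix (T n)) \<noteq> {}"
    and "xs 0 = x"
    and "\<And>n. xs (Suc n) = T n (xs n)"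
  shows "\<exists>p\<in>(\<Inter>n. Fix (T n)). Delta_converges xs p"
proof -
  note cat = assms(1) and gpos = assms(2) and xsS = assms(7)
  have P2: "\<And>n m x y. (1 / \<gamma> m) * ((dist (T n x) (T m y))\<^sup>2 + (dist y (T m y))\<^sup>2 - (dist y (T n x))\<^sup>2)
      \<le> (1 / \<gamma> n) * ((dist x (T m y))\<^sup>2 - (dist x (T n x))\<^sup>2 - (dist (T n x) (T m y))\<^sup>2)"
    using assms(4) unfolding jointly_P2_def by blast
  have memF: "p \<in> (\<Inter>n. Fix (T n)) \<longleftrightarrow> (\<forall>n. T n p = p)" for p by (auto simp: Fix_def)
  obtain p0 where p0: "\<And>n. T n p0 = p0" using assms(5) memF by blast
  define a where "a n = dist (xs n) (xs (Suc n))" for n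
  have a0: "a n \<ge> 0" for n by (simp add: a_def)
  have fej: "(dist (xs (Suc n)) p)\<^sup>2 + (a n)\<^sup>2 \<le> (dist (xs n) p)\<^sup>2" if p: "\<And>n. T n p = p" for p n
  proof -
    have h: "(1 / \<gamma> n) * ((dist (T n (xs n)) (T n p))\<^sup>2 + (dist p (T n p))\<^sup>2 - (dist p (T n (xs n)))\<^sup>2)
      \<le> (1 / \<gamma> n) * ((dist (xs n) (T n p))\<^sup>2 - (dist (xs n) (T n (xs n)))\<^sup>2 - (dist (T n (xs n)) (T n p))\<^sup>2)"
      by (rule P2)
    hence "0 \<le> (1 / \<gamma> n) * ((dist (xs n) p)\<^sup>2 - (a n)\<^sup>2 - (dist (xs (Suc n)) p)\<^sup>2)"
      using p[of n] by (simp add: xsS a_def dist_commute)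
    hence "(1 / \<gamma> n) * 0 \<le> (1 / \<gamma> n) * ((dist (xs n) p)\<^sup>2 - (a n)\<^sup>2 - (dist (xs (Suc n)) p)\<^sup>2)"
      by (simp only: mult_zero_right)
    moreover have gi: "0 < 1 / \<gamma> n" using gpos[of n] by simp
    ultimately have "0 \<le> (dist (xs n) p)\<^sup>2 - (a n)\<^sup>2 - (dist (xs (Suc n)) p)\<^sup>2"
      by (simp only: mult_le_cancel_left_pos[OF gi])
    thus ?thesis by simp
  qed
  have fej1: "dist (xs (Suc n)) p \<le> dist (xs n) p" if p: "\<And>n. T n p = p" for p n
  proof -
    have "(dist (xs (Suc n)) p)\<^sup>2 \<le> (dist (xs n) p)\<^sup>2" using fej[OF p, of n] zero_le_power2[of "a n"] by linarith
    thus ?thesis by (rule power2_le_imp_le) simp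
  qed
  have decx: "dist (xs n) p \<le> dist x p" if p: "\<And>n. T n p = p" for p n
  proof (induction n)
    case 0 thus ?case using assms(6) by simp
  next
    case (Suc n) thus ?case using fej1[OF p, of n] by linarith
  qed
  have psum: "(\<Sum>i<N. (a i)\<^sup>2) \<le> (dist x p0)\<^sup>2 - (dist (xs N) p0)\<^sup>2" for N
  proof (induction N)
    case 0 thus ?case using assms(6) by simp
  next
    case (Suc N) thus ?case using fej[OF p0, of N] by simp
  qed
  have sa: "summable (\<lambda>n. (a n)\<^sup>2)"
  proof (rule summableI_nonneg_bounded[where x="(dist x p0)\<^sup>2"])
    fix N show "(\<Sum>i<N. (a i)\<^sup>2) \<le> (dist x p0)\<^sup>2" using psum[of N] zero_le_power2[of "dist (xs N) p0"] by linarith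
  qed simp
  have "(\<lambda>n. (a n)\<^sup>2) \<longlonglongrightarrow> 0" by (rule summable_LIMSEQ_zero[OF sa])
  hence "(\<lambda>n. sqrt ((a n)\<^sup>2)) \<longlonglongrightarrow> sqrt 0" by (rule tendsto_real_sqrt)
  hence aT: "a \<longlonglongrightarrow> 0" using a0 by simp
  define r where "r n = a n / \<gamma> n" for n
  have r0: "r n \<ge> 0" for n using a0[of n] gpos[of n] by (simp add: r_def)
  have rdec: "r (Suc n) \<le> r n" for n
  proof -
    define b where "b = a (Suc n)"
    define c where "c = dist (xs n) (xs (Suc (Suc n)))"
    have h: "(1 / \<gamma> (Suc n)) * ((dist (T n (xs n)) (T (Suc n) (xs (Suc n))))\<^sup>2 + (dist (xs (Suc n)) (T (Suc n) (xs (Suc n))))\<^sup>2 - (dist (xs (Suc n)) (T n (xs n)))\<^sup>2)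
      \<le> (1 / \<gamma> n) * ((dist (xs n) (T (Suc n) (xs (Suc n))))\<^sup>2 - (dist (xs n) (T n (xs n)))\<^sup>2 - (dist (T n (xs n)) (T (Suc n) (xs (Suc n))))\<^sup>2)"
      by (rule P2)
    hence h2: "(1 / \<gamma> (Suc n)) * (2*b\<^sup>2) \<le> (1 / \<gamma> n) * (c\<^sup>2 - (a n)\<^sup>2 - b\<^sup>2)"
      by (simp add: xsS[symmetric] a_def b_def c_def)
    have "c \<le> a n + b" unfolding c_def a_def b_def by (rule dist_triangle)
    hence "c\<^sup>2 \<le> (a n + b)\<^sup>2" by (simp add: power_mono c_def)
    hence "c\<^sup>2 - (a n)\<^sup>2 - b\<^sup>2 \<le> 2 * a n * b" by (simp add: power2_sum)
    hence "(1 / \<gamma> n) * (c\<^sup>2 - (a n)\<^sup>2 - b\<^sup>2) \<le> (1 / \<gamma> n) * (2 * a n * b)"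
      using gpos[of n] by (intro mult_left_mono) auto
    with h2 have h4: "(1 / \<gamma> (Suc n)) * (2*b\<^sup>2) \<le> (1 / \<gamma> n) * (2 * a n * b)" by linarith
    have e1: "b * (b / \<gamma> (Suc n)) = (1 / \<gamma> (Suc n)) * (2*b\<^sup>2) / 2" by (simp add: power2_eq_square)
    have e2: "b * (a n / \<gamma> n) = (1 / \<gamma> n) * (2 * a n * b) / 2" by simp
    have h3: "b * (b / \<gamma> (Suc n)) \<le> b * (a n / \<gamma> n)"
      unfolding e1 e2 using h4 by (rule divide_right_mono) simp
    show ?thesis
    proof (cases "b = 0")
      case True thus ?thesis using r0[of n] by (simp add: r_def b_def)
    next
      case False
      hence "b > 0" using a0 b_def by (metis less_eq_real_def)
      hence "b / \<gamma> (Suc n) \<le> a n / \<gamma> n" using h3 mult_le_cancel_left_pos[of b "b / \<gamma> (Suc n)" "a n / \<gamma> n"] by blast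
      thus ?thesis by (simp add: r_def b_def)
    qed
  qed
  have rT: "r \<longlonglongrightarrow> 0"
  proof -
    have "decseq r" by (rule decseq_SucI) (rule rdec)
    moreover have "\<forall>i. 0 \<le> r i" using r0 by simp
    ultimately obtain L where L: "r \<longlonglongrightarrow> L" "\<forall>i. L \<le> r i"
      by (rule decseq_convergent)
    have "L \<ge> 0" by (rule LIMSEQ_le_const[OF L(1)]) (use r0 in blast)
    moreover have "\<not> L > 0"
    proof
      assume Lp: "L > 0"
      have sm2: "summable (\<lambda>n. (a n)\<^sup>2 / L\<^sup>2)" using sa by (rule summable_divide)
      have nb: "norm ((\<gamma> n)\<^sup>2) \<le> (a n)\<^sup>2 / L\<^sup>2" for n
      proof -
        have "L * \<gamma> n \<le> a n" using L(2)[rule_format, of n] gpos[of n] by (simp add: r_def pos_le_divide_eq)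
        hence "(L * \<gamma> n)\<^sup>2 \<le> (a n)\<^sup>2" using Lp gpos[of n] by (intro power_mono) auto
        hence "(\<gamma> n)\<^sup>2 * L\<^sup>2 \<le> (a n)\<^sup>2" by (simp add: power_mult_distrib mult.commute)
        thus ?thesis using Lp by (simp add: pos_le_divide_eq)
      qed
      have "summable (\<lambda>n. (\<gamma> n)\<^sup>2)"
        by (rule summable_comparison_test[OF _ sm2]) (use nb in blast)
      thus False using assms(3) by blast
    qed
    ultimately have "L = 0" by simp
    thus ?thesis using L(1) by simp
  qed
  have bnd: "dist y (xs n) \<le> dist y p0 + dist x p0" for y n
    using dist_triangle[of y "xs n" p0] decx[OF p0, of n] by (simp add: dist_commute)
  have bd: "bounded (range (xs \<circ> \<sigma>))" for \<sigma>
    unfolding bounded_any_center[of _ p0] using bnd[of p0] by auto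
  have inF: "T m z = z" if sm: "strict_mono \<sigma>" and zc: "asymptotic_center (xs \<circ> \<sigma>) z" for \<sigma> z m
  proof (rule ccontr)
    assume ne: "T m z \<noteq> z"
    define w where "w = T m z"
    define D where "D = dist z w"
    have D0: "D > 0" using ne by (simp add: D_def w_def dist_commute)
    define Bw where "Bw = dist w p0 + dist x p0"
    define Bz where "Bz = dist z p0 + dist x p0"
    define e where "e n = \<gamma> m * 2 * Bw * r n + 2 * Bw * a n + 2 * Bz * a n" for n
    have base: "(dist w (xs n))\<^sup>2 \<le> (dist z (xs n))\<^sup>2 - D\<^sup>2 + e n" for n
    proof -
      have h: "(1 / \<gamma> m) * ((dist (T n (xs n)) (T m z))\<^sup>2 + (dist z (T m z))\<^sup>2 - (dist z (T n (xs n)))\<^sup>2)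
        \<le> (1 / \<gamma> n) * ((dist (xs n) (T m z))\<^sup>2 - (dist (xs n) (T n (xs n)))\<^sup>2 - (dist (T n (xs n)) (T m z))\<^sup>2)"
        by (rule P2)
      hence h1: "(1 / \<gamma> m) * ((dist w (xs (Suc n)))\<^sup>2 + D\<^sup>2 - (dist z (xs (Suc n)))\<^sup>2)
        \<le> (1 / \<gamma> n) * ((dist w (xs n))\<^sup>2 - (a n)\<^sup>2 - (dist w (xs (Suc n)))\<^sup>2)"
        by (simp add: xsS[symmetric] w_def D_def a_def dist_commute)
      have s1: "(dist w (xs n))\<^sup>2 \<le> (dist w (xs (Suc n)))\<^sup>2 + 2*Bw*a n"
        unfolding a_def Bw_def by (rule sqdiff) (rule bnd)+
      have "(1 / \<gamma> n) * ((dist w (xs n))\<^sup>2 - (a n)\<^sup>2 - (dist w (xs (Suc n)))\<^sup>2) \<le> (1 / \<gamma> n) * (2*Bw*a n)"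
        by (rule mult_left_mono) (use s1 zero_le_power2[of "a n"] in linarith, use gpos[of n] in simp)
      also have "\<dots> = 2 * Bw * r n" by (simp add: r_def)
      finally have "(1 / \<gamma> m) * ((dist w (xs (Suc n)))\<^sup>2 + D\<^sup>2 - (dist z (xs (Suc n)))\<^sup>2) \<le> 2 * Bw * r n"
        using h1 by linarith
      hence "(dist w (xs (Suc n)))\<^sup>2 + D\<^sup>2 - (dist z (xs (Suc n)))\<^sup>2 \<le> \<gamma> m * 2 * Bw * r n"
        using gpos[of m] by (simp add: field_simps)
      moreover have "(dist z (xs (Suc n)))\<^sup>2 \<le> (dist z (xs n))\<^sup>2 + 2*Bz*a n"
        unfolding a_def Bz_def using sqdiff[OF bnd bnd, of z "Suc n" n] by (simp add: dist_commute)
      ultimately show ?thesis using s1 unfolding e_def by linarith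
    qed
    have "e \<longlonglongrightarrow> \<gamma> m * 2 * Bw * 0 + 2 * Bw * 0 + 2 * Bz * 0"
      unfolding e_def by (intro tendsto_intros rT aT)
    hence "eventually (\<lambda>n. e n < D\<^sup>2/2) sequentially" using D0 by (intro order_tendstoD(2)) auto
    hence "eventually (\<lambda>n. (dist w (xs n))\<^sup>2 \<le> (dist z (xs n))\<^sup>2 - D\<^sup>2/2) sequentially"
    proof eventually_elim
      case (elim n) thus ?case using base[of n] by linarith
    qed
    hence evk: "eventually (\<lambda>k. (dist w ((xs \<circ> \<sigma>) k))\<^sup>2 \<le> (dist z ((xs \<circ> \<sigma>) k))\<^sup>2 - D\<^sup>2/2) sequentially"
      using eventually_compose_filterlim[OF _ filterlim_subseq[OF sm]] by (simp add: o_def)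
    obtain R where R: "R \<ge> 0" "limsup (\<lambda>k. ereal (dist z ((xs \<circ> \<sigma>) k))) = ereal R"
      using L_fin[OF bd] by blast
    show False
    proof (rule L_G[OF zc R(2) R(1), of "D\<^sup>2/2" w])
      show "0 < D\<^sup>2/2" using D0 by simp
      fix \<epsilon> :: real assume ep: "\<epsilon> > 0"
      have "ereal R < ereal (R+\<epsilon>)" using ep by simp
      hence e1: "eventually (\<lambda>k. ereal (dist z ((xs \<circ> \<sigma>) k)) < ereal (R+\<epsilon>)) sequentially"
        using R(2) by (metis Limsup_lessD)
      show "eventually (\<lambda>k. (dist w ((xs \<circ> \<sigma>) k))\<^sup>2 \<le> (R+\<epsilon>)\<^sup>2 - D\<^sup>2/2) sequentially"
        using e1 evk
      proof eventually_elim
        case (elim k)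
        have "(dist z ((xs \<circ> \<sigma>) k))\<^sup>2 \<le> (R+\<epsilon>)\<^sup>2" using elim(1) by (simp add: power_mono)
        thus ?case using elim(2) by linarith
      qed
    qed
  qed
  have LS: "\<exists>Lc. \<forall>\<sigma>. strict_mono \<sigma> \<longrightarrow> limsup (\<lambda>k. ereal (dist c ((xs \<circ> \<sigma>) k))) = ereal Lc"
    if c: "\<And>n. T n c = c" for c
  proof -
    have "decseq (\<lambda>n. dist c (xs n))"
      by (rule decseq_SucI) (use fej1[OF c] in \<open>simp add: dist_commute\<close>)
    moreover have "\<forall>i. 0 \<le> dist c (xs i)" by simp
    ultimately obtain Lc where Lc: "(\<lambda>n. dist c (xs n)) \<longlonglongrightarrow> Lc" "\<forall>i. Lc \<le> dist c (xs i)"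
      by (rule decseq_convergent)
    have "limsup (\<lambda>k. ereal (dist c ((xs \<circ> \<sigma>) k))) = ereal Lc" if sm: "strict_mono \<sigma>" for \<sigma>
    proof (rule lim_imp_Limsup)
      show "sequentially \<noteq> bot" by simp
      have "((\<lambda>n. dist c (xs n)) \<circ> \<sigma>) \<longlonglongrightarrow> Lc" by (rule LIMSEQ_subseq_LIMSEQ[OF Lc(1) sm])
      thus "(\<lambda>k. ereal (dist c ((xs \<circ> \<sigma>) k))) \<longlonglongrightarrow> ereal Lc"
        by (simp add: lim_ereal o_def)
    qed
    thus ?thesis by blast
  qed
  obtain p where pc: "asymptotic_center xs p"
    using L_exist[OF cat bd[of id]] by auto
  have smid: "strict_mono (id::nat\<Rightarrow>nat)" by (simp add: strict_mono_def)
  have pF: "\<And>n. T n p = p" using inF[OF smid] pc by simp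
  obtain Lp where Lp: "\<And>\<sigma>. strict_mono \<sigma> \<Longrightarrow> limsup (\<lambda>k. ereal (dist p ((xs \<circ> \<sigma>) k))) = ereal Lp"
    using LS[OF pF] by blast
  have pcs: "asymptotic_center (xs \<circ> \<sigma>) p" if sm: "strict_mono \<sigma>" for \<sigma>
  proof -
    obtain c' where c': "asymptotic_center (xs \<circ> \<sigma>) c'" using L_exist[OF cat bd[of \<sigma>]] by auto
    have c'F: "\<And>n. T n c' = c'" using inF[OF sm c'] by simp
    obtain Lc where Lc: "\<And>\<sigma>. strict_mono \<sigma> \<Longrightarrow> limsup (\<lambda>k. ereal (dist c' ((xs \<circ> \<sigma>) k))) = ereal Lc"
      using LS[OF c'F] by blast
    have "limsup (\<lambda>k. ereal (dist p (xs k))) \<le> limsup (\<lambda>k. ereal (dist c' (xs k)))"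
      using pc unfolding asymptotic_center_def by blast
    hence "Lp \<le> Lc" using Lp[OF smid] Lc[OF smid] by simp
    have "limsup (\<lambda>k. ereal (dist c' ((xs \<circ> \<sigma>) k))) \<le> limsup (\<lambda>k. ereal (dist p ((xs \<circ> \<sigma>) k)))"
      using c' unfolding asymptotic_center_def by blast
    hence "Lc \<le> Lp" using Lp[OF sm] Lc[OF sm] by simp
    have "limsup (\<lambda>k. ereal (dist p ((xs \<circ> \<sigma>) k))) = limsup (\<lambda>k. ereal (dist c' ((xs \<circ> \<sigma>) k)))"
      using Lp[OF sm] Lc[OF sm] \<open>Lp \<le> Lc\<close> \<open>Lc \<le> Lp\<close> by simp
    thus ?thesis using c' unfolding asymptotic_center_def by simp
  qed
  have "Delta_converges xs p"
    unfolding Delta_converges_def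
  proof (intro conjI allI impI)
    show "bounded (range xs)" using bd[of id] by simp
    fix \<sigma> :: "nat \<Rightarrow> nat" and c assume sm: "strict_mono \<sigma>"
    show "asymptotic_center (xs \<circ> \<sigma>) c \<longleftrightarrow> c = p"
      using L_unique[OF cat bd[of \<sigma>] _ pcs[OF sm]] pcs[OF sm] by blast
  qed
  thus ?thesis using pF memF by blast
qed

end
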